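(* There is an $\epsilon>0$ and a unique family of complex functions $\{R_{i,j}^{(k)}:D_{1+\epsilon}\to\mathbb C : i\neq j,\ 1\le i,j\le N,\ k\in\{-1,1\}\}$, where $D_r=\{z\in\mathbb C:|z|<r\}$, satisfying: (R1) each $R_{i,j}^{(k)}$ is complex analytic in $D_{1+\epsilon}$; (R2) if $\lambda\in[0,1]$ then $R_{i,j}^{(k)}(\lambda)\in(0,1)$; (R3) for all $\lambda\in D_{1+\epsilon}$ and all $i\ne j$, $k$, $$R_{i,j}^{(k)}=\lambda\Big[p_{i,j}^{(k)}+\sum_{m\neq i,j}p_{i,m}^{(k)}R_{m,j}^{(k)}+\sum_{m\neq i}p_{i,m}^{(-k)}R_{m,i}^{(-k)}R_{i,j}^{(k)}\Big].$$
   Context: Fix an integer $N\ge3$ and numbers $p_{i,j}^{(k)}\in(0,1)$ for $i\ne j\in\{1,\dots,N\}$, $k\in\{-1,1\}$, satisfying $\sum_{j\ne i}\sum_{k=\pm1}p_{i,j}^{(k)}=1$ for each $i$. (These are the transition probabilities of a Markov chain on the fundamental groupoid generated by arrows $A_{i,j}^{(k)}$, which from an arrow with target $i$ appends $A_{i,j}^{(k)}$ with probability $p_{i,j}^{(k)}$; but the statement only involves these numbers.) *)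

theory Defs
  imports "HOL-Analysis.Analysis"
begin

definition arrow_idx :: "nat \<Rightarrow> nat \<Rightarrow> nat \<Rightarrow> int \<Rightarrow> bool" where
  "arrow_idx N i j k \<longleftrightarrow> i \<in> {1..N} \<and> j \<in> {1..N} \<and> i \<noteq> j \<and> k \<in> {-1, 1}"

definition R_family ::
  "nat \<Rightarrow> (nat \<Rightarrow> nat \<Rightarrow> int \<Rightarrow> real) \<Rightarrow> real \<Rightarrow> (nat \<Rightarrow> nat \<Rightarrow> int \<Rightarrow> complex \<Rightarrow> complex) \<Rightarrow> bool"
  where
  "R_family N p eps R \<longleftrightarrow>
     (\<forall>i j k. arrow_idx N i j k \<longrightarrow> R i j k holomorphic_on ball 0 (1 + eps)) \<and>
     (\<forall>i j k. arrow_idx N i j k \<longrightarrow>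
        (\<forall>l::real. 0 < l \<and> l \<le> 1 \<longrightarrow>
           (\<exists>r::real. 0 < r \<and> r < 1 \<and> R i j k (complex_of_real l) = complex_of_real r))) \<and>
     (\<forall>i j k. arrow_idx N i j k \<longrightarrow>
        (\<forall>z \<in> ball 0 (1 + eps).
           R i j k z = z * (complex_of_real (p i j k)
              + (\<Sum>m \<in> {1..N} - {i, j}. complex_of_real (p i m k) * R m j k z)
              + (\<Sum>m \<in> {1..N} - {i}. complex_of_real (p i m (-k)) * R m i (-k) z * R i j k z))))"

end

theory Submission
  imports Defs "HOL-Complex_Analysis.Complex_Analysis"
begin


section \<open>Generic monotone iteration\<close>

primrec lit :: "'i set \<Rightarrow> ('i \<Rightarrow> real) \<Rightarrow> ('i \<Rightarrow> 'i \<Rightarrow> real) \<Rightarrow> nat \<Rightarrow> 'i \<Rightarrow> real" where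
  "lit S b K 0 = (\<lambda>i. 0)"
| "lit S b K (Suc n) = (\<lambda>i. b i + (\<Sum>l\<in>S. K i l * lit S b K n l))"

lemma lit_nonneg:
  assumes "\<forall>i\<in>S. 0 \<le> b i" "\<forall>i\<in>S. \<forall>l\<in>S. 0 \<le> K i l"
  shows "\<forall>i\<in>S. 0 \<le> lit S b K n i"
proof (induction n)
  case 0 then show ?case by simp
next
  case (Suc n)
  show ?case using assms Suc by (auto intro!: add_nonneg_nonneg sum_nonneg)
qed

lemma lit_mono:
  assumes "\<forall>i\<in>S. 0 \<le> b i" "\<forall>i\<in>S. \<forall>l\<in>S. 0 \<le> K i l"
  shows "\<forall>i\<in>S. lit S b K n i \<le> lit S b K (Suc n) i"
proof (induction n)
  case 0 then show ?case using assms by (simp add: mult_nonneg_nonneg)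
next
  case (Suc n)
  show ?case
  proof
    fix i assume i: "i \<in> S"
    have "(\<Sum>l\<in>S. K i l * lit S b K n l) \<le> (\<Sum>l\<in>S. K i l * lit S b K (Suc n) l)"
      using Suc assms i by (intro sum_mono mult_left_mono) auto
    then show "lit S b K (Suc n) i \<le> lit S b K (Suc (Suc n)) i" by simp
  qed
qed

lemma lit_super:
  assumes "\<forall>i\<in>S. \<forall>l\<in>S. 0 \<le> K i l"
    and "\<forall>i\<in>S. b i + (\<Sum>l\<in>S. K i l * g l) \<le> g i" "\<forall>i\<in>S. 0 \<le> g i"
  shows "\<forall>i\<in>S. lit S b K n i \<le> g i"
proof (induction n)
  case 0 then show ?case using assms by simp
next
  case (Suc n)
  show ?case
  proof
    fix i assume i: "i \<in> S"
    have "(\<Sum>l\<in>S. K i l * lit S b K n l) \<le> (\<Sum>l\<in>S. K i l * g l)"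
      using Suc assms i by (intro sum_mono mult_left_mono) auto
    then show "lit S b K (Suc n) i \<le> g i" using assms(2) i by force
  qed
qed

lemma lit_limit:
  assumes fin: "finite S" and b: "\<forall>i\<in>S. 0 \<le> b i" and K: "\<forall>i\<in>S. \<forall>l\<in>S. 0 \<le> K i l"
    and bd: "\<And>n i. i \<in> S \<Longrightarrow> lit S b K n i \<le> C i"
  shows "\<exists>x. \<forall>i\<in>S. b i \<le> x i \<and> x i = b i + (\<Sum>l\<in>S. K i l * x l)"
proof -
  have conv: "\<exists>L. (\<lambda>n. lit S b K n i) \<longlonglongrightarrow> L \<and> (\<forall>n. lit S b K n i \<le> L)" if i: "i \<in> S" for i
  proof -
    have inc: "incseq (\<lambda>n. lit S b K n i)"
      using lit_mono[OF b K] i by (intro incseq_SucI) auto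
    have "\<forall>n. lit S b K n i \<le> C i" using bd i by auto
    from incseq_convergent[OF inc this] show ?thesis by blast
  qed
  define x where "x i = lim (\<lambda>n. lit S b K n i)" for i
  have lx: "(\<lambda>n. lit S b K n i) \<longlonglongrightarrow> x i" and ub: "\<forall>n. lit S b K n i \<le> x i" if "i \<in> S" for i
    using conv[OF that] unfolding x_def by (auto simp: limI)
  show ?thesis
  proof (intro exI ballI conjI)
    fix i assume i: "i \<in> S"
    have "lit S b K (Suc 0) i \<le> x i" using ub[OF i] by blast
    then show "b i \<le> x i" by simp
    have "(\<lambda>n. lit S b K (Suc n) i) \<longlonglongrightarrow> x i" using lx[OF i] by (rule LIMSEQ_Suc)
    moreover have "(\<lambda>n. lit S b K (Suc n) i) \<longlonglongrightarrow> b i + (\<Sum>l\<in>S. K i l * x l)"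
      unfolding lit.simps using lx by (auto intro!: tendsto_intros)
    ultimately show "x i = b i + (\<Sum>l\<in>S. K i l * x l)" by (rule LIMSEQ_unique)
  qed
qed

lemma finite_pos_choice:
  assumes "finite A"
    and "\<And>a. a \<in> A \<Longrightarrow> \<exists>d>0. \<forall>d'. 0 < d' \<and> d' \<le> d \<longrightarrow> P a d'"
  shows "\<exists>d>(0::real). \<forall>a\<in>A. P a d"
proof -
  have "\<exists>d>(0::real). \<forall>a\<in>A. \<forall>d'. 0 < d' \<and> d' \<le> d \<longrightarrow> P a d'"
    using assms
  proof (induction A rule: finite_induct)
    case empty then show ?case by (auto intro: exI[of _ 1])
  next
    case (insert x F)
    have "\<And>a. a \<in> F \<Longrightarrow> \<exists>d>0. \<forall>d'. 0 < d' \<and> d' \<le> d \<longrightarrow> P a d'" using insert.prems by auto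
    then obtain d1 where d1: "d1 > 0" "\<forall>a\<in>F. \<forall>d'. 0 < d' \<and> d' \<le> d1 \<longrightarrow> P a d'"
      using insert.IH by blast
    obtain d2 where d2: "d2 > 0" "\<forall>d'. 0 < d' \<and> d' \<le> d2 \<longrightarrow> P x d'" using insert.prems[of x] by auto
    show ?case using d1 d2 by (intro exI[of _ "min d1 d2"]) auto
  qed
  then show ?thesis by (meson order_refl)
qed

lemma sum_swap_ne:
  assumes "finite S"
  shows "(\<Sum>m\<in>S. \<Sum>l\<in>S-{m}. g m l) = (\<Sum>l\<in>S. \<Sum>m\<in>S-{l}. g m l)"
proof -
  have r: "(\<Sum>l\<in>S. if l = m then 0 else g m l) = (\<Sum>l\<in>S-{m}. g m l)" if "m \<in> S" for m
    by (subst sum.remove[OF assms that]) (auto intro!: sum.cong split: if_splits)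
  have r2: "(\<Sum>m\<in>S. if l = m then 0 else g m l) = (\<Sum>m\<in>S-{l}. g m l)" if "l \<in> S" for l
    by (subst sum.remove[OF assms that]) (auto intro!: sum.cong split: if_splits)
  have "(\<Sum>m\<in>S. \<Sum>l\<in>S-{m}. g m l) = (\<Sum>m\<in>S. \<Sum>l\<in>S. if l = m then 0 else g m l)"
    by (rule sum.cong[OF refl], rule r[symmetric])
  also have "\<dots> = (\<Sum>l\<in>S. \<Sum>m\<in>S. if l = m then 0 else g m l)" by (rule sum.swap)
  also have "\<dots> = (\<Sum>l\<in>S. \<Sum>m\<in>S-{l}. g m l)"
    by (rule sum.cong[OF refl], rule r2)
  finally show ?thesis .
qed

lemma sum_if_remove:
  fixes c x :: "'a \<Rightarrow> real"
  assumes "finite S" "i \<in> S"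
  shows "(\<Sum>l\<in>S. (if l = i then 0 else c l) * x l) = (\<Sum>l\<in>S-{i}. c l * x l)"
  by (subst sum.remove[OF assms]) (auto intro!: sum.cong)

definition PP :: "nat \<Rightarrow> (nat \<Rightarrow> nat \<Rightarrow> int \<Rightarrow> real) \<Rightarrow> int \<Rightarrow> nat \<Rightarrow> real" where
  "PP N p k i = (\<Sum>m\<in>{1..N}-{i}. p i m k)"

locale rw =
  fixes N :: nat and p :: "nat \<Rightarrow> nat \<Rightarrow> int \<Rightarrow> real"
  assumes N3: "N \<ge> 3"
    and ppos: "\<And>i j k. arrow_idx N i j k \<Longrightarrow> 0 < p i j k \<and> p i j k < 1"
    and psum: "\<And>i. i \<in> {1..N} \<Longrightarrow> (\<Sum>j \<in> {1..N} - {i}. \<Sum>k \<in> {-1, 1::int}. p i j k) = 1"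
begin

abbreviation "P \<equiv> PP N p"

lemma pp: "i \<in> {1..N} \<Longrightarrow> j \<in> {1..N} \<Longrightarrow> i \<noteq> j \<Longrightarrow> k \<in> {-1,1} \<Longrightarrow> 0 < p i j k"
  using ppos by (auto simp: arrow_idx_def)

lemma P_pos: assumes "i \<in> {1..N}" "k \<in> {-1,1}" shows "0 < P k i"
proof -
  have "\<exists>j. j \<in> {1..N} \<and> j \<noteq> i"
  proof (cases "i = 1")
    case True then show ?thesis using N3 by (intro exI[of _ 2]) auto
  next
    case False then show ?thesis using assms by (intro exI[of _ 1]) auto
  qed
  then obtain j where j: "j \<in> {1..N}" "j \<noteq> i" by blast
  have "p i j k \<le> P k i" unfolding PP_def
    using j assms pp by (intro member_le_sum) (auto intro: less_imp_le)
  moreover have "0 < p i j k" using pp j assms by auto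
  ultimately show ?thesis by linarith
qed

lemma P_sum: assumes "i \<in> {1..N}" "k \<in> {-1,1}" shows "P k i + P (-k) i = 1"
proof -
  have "1 = (\<Sum>j \<in> {1..N} - {i}. p i j (-1) + p i j 1)" using psum[OF assms(1)] by simp
  also have "\<dots> = P (-1) i + P 1 i" unfolding PP_def by (simp add: sum.distrib)
  finally show ?thesis using assms(2) by auto
qed

lemma P_remove: assumes "i \<in> {1..N}" "j \<in> {1..N}" "i \<noteq> j"
  shows "P k i = p i j k + (\<Sum>m\<in>{1..N}-{i,j}. p i m k)"
proof -
  have "P k i = p i j k + (\<Sum>m\<in>{1..N}-{i}-{j}. p i m k)" unfolding PP_def
    using assms by (subst sum.remove[of _ j]) auto
  also have "{1..N}-{i}-{j} = {1..N}-{i,j}" by auto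
  finally show ?thesis .
qed

lemma poisson:
  assumes j: "j \<in> {1..N}" and k: "k \<in> {-1,1}" and s: "\<forall>i\<in>{1..N}-{j}. 0 \<le> s i"
  shows "\<exists>f. \<forall>i\<in>{1..N}-{j}. s i / P k i \<le> f i \<and>
            P k i * f i - (\<Sum>m\<in>{1..N}-{i,j}. p i m k * f m) = s i"
proof -
  define S where "S = {1..N}-{j}"
  define b where "b i = s i / P k i" for i
  define K where "K i l = (if l = i then 0 else p i l k / P k i)" for i l
  have fS: "finite S" unfolding S_def by auto
  have Pp: "i \<in> S \<Longrightarrow> 0 < P k i" for i using P_pos k unfolding S_def by auto
  have keq: "(\<Sum>l\<in>S. K i l * x l) = (\<Sum>m\<in>{1..N}-{i,j}. p i m k * x m) / P k i" if i: "i \<in> S" for i x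
  proof -
    have "(\<Sum>l\<in>S. K i l * x l) = (\<Sum>l\<in>S-{i}. p i l k / P k i * x l)"
      unfolding K_def by (rule sum_if_remove[OF fS i])
    also have "S - {i} = {1..N}-{i,j}" unfolding S_def by auto
    finally show ?thesis by (simp add: sum_divide_distrib)
  qed
  have b0: "\<forall>i\<in>S. 0 \<le> b i"
  proof
    fix i assume "i \<in> S" then show "0 \<le> b i" using s Pp[of i] unfolding b_def S_def by simp
  qed
  have K0: "\<forall>i\<in>S. \<forall>l\<in>S. 0 \<le> K i l" unfolding K_def S_def
    using pp k P_pos by (auto intro!: divide_nonneg_pos less_imp_le)
  define g where "g = (\<Sum>i\<in>S. s i / p i j k)"
  have g0: "0 \<le> g" unfolding g_def S_def using s pp j k by (auto intro!: sum_nonneg divide_nonneg_pos)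
  have sup: "\<forall>i\<in>S. b i + (\<Sum>l\<in>S. K i l * g) \<le> g"
  proof
    fix i assume i: "i \<in> S"
    have ij: "i \<in> {1..N}" "i \<noteq> j" using i unfolding S_def by auto
    have pij: "0 < p i j k" using pp ij j k by auto
    have "s i / p i j k \<le> g" unfolding g_def using i s pp j k
      by (intro member_le_sum) (auto simp: S_def intro!: divide_nonneg_pos)
    then have sg: "s i \<le> g * p i j k" using pij by (simp add: divide_le_eq mult.commute)
    have "(\<Sum>l\<in>S. K i l * g) = g * (P k i - p i j k) / P k i"
      using keq[OF i, of "\<lambda>_. g"] P_remove[OF ij(1) j ij(2), of k]
      by (simp add: sum_distrib_left mult.commute)
    then have "b i + (\<Sum>l\<in>S. K i l * g) = (s i + g * (P k i - p i j k)) / P k i"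
      unfolding b_def by (simp add: add_divide_distrib)
    also have "\<dots> \<le> g" using Pp[OF i] sg by (simp add: divide_le_eq algebra_simps)
    finally show "b i + (\<Sum>l\<in>S. K i l * g) \<le> g" .
  qed
  have bd: "lit S b K n i \<le> g" if "i \<in> S" for n i
    using lit_super[OF K0, of b "\<lambda>_. g"] sup g0 that by auto
  obtain x where x: "\<forall>i\<in>S. b i \<le> x i \<and> x i = b i + (\<Sum>l\<in>S. K i l * x l)"
    using lit_limit[OF fS b0 K0 bd] by blast
  show ?thesis
  proof (intro exI[of _ x] ballI conjI)
    fix i assume i: "i \<in> {1..N}-{j}"
    then have iS: "i \<in> S" unfolding S_def .
    have xb: "b i \<le> x i" and xe: "x i = b i + (\<Sum>l\<in>S. K i l * x l)" using x iS by blast+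
    show "s i / P k i \<le> x i" using xb unfolding b_def .
    have "x i = (s i + (\<Sum>m\<in>{1..N}-{i,j}. p i m k * x m)) / P k i"
      apply (subst xe) unfolding keq[OF iS, of x] b_def by (simp add: add_divide_distrib)
    then show "P k i * x i - (\<Sum>m\<in>{1..N}-{i,j}. p i m k * x m) = s i"
      using Pp[OF iS] by (simp add: field_simps)
  qed
qed

lemma stationary:
  assumes k: "k \<in> {-1,1}"
  shows "\<exists>\<pi>. (\<forall>m\<in>{1..N}. 0 < \<pi> m) \<and>
     (\<forall>m'\<in>{1..N}. (\<Sum>m\<in>{1..N}-{m'}. \<pi> m * p m m' k) = \<pi> m' * P k m')"
proof -
  define S where "S = {1..N}-{1}"
  define b where "b m' = p 1 m' k / P k m'" for m'
  define K where "K m' m = (if m = m' then 0 else p m m' k / P k m')" for m' m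
  have fS: "finite S" unfolding S_def by auto
  have one: "(1::nat) \<in> {1..N}" using N3 by auto
  have Pp: "m \<in> {1..N} \<Longrightarrow> 0 < P k m" for m using P_pos k by auto
  have SN: "m \<in> S \<Longrightarrow> m \<in> {1..N} \<and> m \<noteq> 1" for m unfolding S_def by auto
  have keq: "(\<Sum>m\<in>S. K m' m * x m) = (\<Sum>m\<in>S-{m'}. p m m' k * x m) / P k m'"
    if "m' \<in> S" for m' x
  proof -
    have "(\<Sum>m\<in>S. K m' m * x m) = (\<Sum>m\<in>S-{m'}. p m m' k / P k m' * x m)"
      unfolding K_def by (rule sum_if_remove[OF fS that])
    then show ?thesis by (simp add: sum_divide_distrib)
  qed
  have mass: "(\<Sum>m'\<in>S. P k m' * (b m' + (\<Sum>m\<in>S. K m' m * x m)))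
      = P k 1 + (\<Sum>m\<in>S. x m * (P k m - p m 1 k))" for x
  proof -
    have "(\<Sum>m'\<in>S. P k m' * (b m' + (\<Sum>m\<in>S. K m' m * x m)))
        = (\<Sum>m'\<in>S. p 1 m' k + (\<Sum>m\<in>S-{m'}. p m m' k * x m))"
    proof (rule sum.cong[OF refl])
      fix m' assume m': "m' \<in> S"
      show "P k m' * (b m' + (\<Sum>m\<in>S. K m' m * x m)) = p 1 m' k + (\<Sum>m\<in>S-{m'}. p m m' k * x m)"
        unfolding keq[OF m'] b_def using Pp[of m'] SN[OF m'] by (simp add: field_simps)
    qed
    also have "\<dots> = (\<Sum>m'\<in>S. p 1 m' k) + (\<Sum>m'\<in>S. \<Sum>m\<in>S-{m'}. p m m' k * x m)"
      by (rule sum.distrib)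
    also have "(\<Sum>m'\<in>S. p 1 m' k) = P k 1" unfolding PP_def S_def ..
    also have "(\<Sum>m'\<in>S. \<Sum>m\<in>S-{m'}. p m m' k * x m) = (\<Sum>m\<in>S. \<Sum>m'\<in>S-{m}. p m m' k * x m)"
      by (rule sum_swap_ne[OF fS])
    also have "\<dots> = (\<Sum>m\<in>S. x m * (P k m - p m 1 k))"
    proof (rule sum.cong[OF refl])
      fix m assume m: "m \<in> S"
      have "P k m = p m 1 k + (\<Sum>m'\<in>{1..N}-{m,1}. p m m' k)"
        using SN[OF m] one by (intro P_remove) auto
      moreover have "S - {m} = {1..N}-{m,1}" unfolding S_def by auto
      ultimately show "(\<Sum>m'\<in>S-{m}. p m m' k * x m) = x m * (P k m - p m 1 k)"
        by (simp add: sum_distrib_left mult.commute)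
    qed
    finally show ?thesis .
  qed
  have "\<exists>d>(0::real). \<forall>m\<in>S. d * P k m \<le> p m 1 k \<and> d \<le> 1"
  proof (rule finite_pos_choice[OF fS])
    fix m assume m: "m \<in> S"
    have pm: "0 < p m 1 k" using pp SN[OF m] one k by auto
    show "\<exists>d>0. \<forall>d'. 0 < d' \<and> d' \<le> d \<longrightarrow> d' * P k m \<le> p m 1 k \<and> d' \<le> 1"
    proof (intro exI[of _ "min (p m 1 k / P k m) 1"] conjI allI impI)
      show "0 < min (p m 1 k / P k m) 1" using pm Pp[of m] SN[OF m] by auto
      fix d' assume d': "0 < d' \<and> d' \<le> min (p m 1 k / P k m) 1"
      then have "d' \<le> p m 1 k / P k m" by auto
      then show "d' * P k m \<le> p m 1 k" using Pp[of m] SN[OF m] by (simp add: le_divide_eq)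
      show "d' \<le> 1" using d' by auto
    qed
  qed
  then obtain \<delta> where \<delta>: "\<delta> > 0" "\<forall>m\<in>S. \<delta> * P k m \<le> p m 1 k \<and> \<delta> \<le> 1" by blast
  have b0: "\<forall>i\<in>S. 0 \<le> b i"
  proof
    fix i assume i: "i \<in> S"
    have "0 < p 1 i k" "0 < P k i" using pp[of 1 i k] one k Pp[of i] SN[OF i] by auto
    then show "0 \<le> b i" unfolding b_def by simp
  qed
  have K0: "\<forall>i\<in>S. \<forall>l\<in>S. 0 \<le> K i l" unfolding K_def using pp k Pp SN
    by (auto intro!: divide_nonneg_pos less_imp_le)
  have xnn: "\<forall>i\<in>S. 0 \<le> lit S b K n i" for n using lit_nonneg[OF b0 K0] .
  have T: "(\<Sum>m\<in>S. P k m * lit S b K n m) \<le> P k 1 / \<delta>" for n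
  proof (induction n)
    case 0 then show ?case using Pp[OF one] \<delta> by simp
  next
    case (Suc n)
    let ?x = "lit S b K n"
    have "(\<Sum>m\<in>S. P k m * lit S b K (Suc n) m) = P k 1 + (\<Sum>m\<in>S. ?x m * (P k m - p m 1 k))"
      using mass[of ?x] by simp
    also have "\<dots> \<le> P k 1 + (\<Sum>m\<in>S. (1 - \<delta>) * (P k m * ?x m))"
    proof -
      have "?x m * (P k m - p m 1 k) \<le> (1 - \<delta>) * (P k m * ?x m)" if m: "m \<in> S" for m
      proof -
        have "P k m - p m 1 k \<le> (1 - \<delta>) * P k m" using \<delta> m by (simp add: algebra_simps)
        then have "?x m * (P k m - p m 1 k) \<le> ?x m * ((1 - \<delta>) * P k m)"
          using xnn m by (intro mult_left_mono) auto
        then show ?thesis by (simp add: mult_ac)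
      qed
      then show ?thesis by (intro add_left_mono sum_mono) auto
    qed
    also have "\<dots> = P k 1 + (1 - \<delta>) * (\<Sum>m\<in>S. P k m * ?x m)" by (simp add: sum_distrib_left)
    also have "\<dots> \<le> P k 1 + (1 - \<delta>) * (P k 1 / \<delta>)"
    proof -
      have "(2::nat) \<in> S" using N3 unfolding S_def by auto
      then have "\<delta> \<le> 1" using \<delta> by blast
      then show ?thesis using Suc by (intro add_left_mono mult_left_mono) auto
    qed
    also have "\<dots> = P k 1 / \<delta>" using \<delta> by (simp add: field_simps)
    finally show ?case .
  qed
  have bd: "lit S b K n m \<le> (P k 1 / \<delta>) / P k m" if m: "m \<in> S" for n m
  proof -
    have nn: "0 \<le> P k x * lit S b K n x" if x: "x \<in> S" for x
      using xnn[of n] x Pp[of x] SN[OF x] by simp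
    have "P k m * lit S b K n m \<le> (\<Sum>m\<in>S. P k m * lit S b K n m)"
      using nn by (intro member_le_sum[OF m _ fS]) auto
    also note T
    finally have f: "P k m * lit S b K n m \<le> P k 1 / \<delta>" .
    have Ppm: "0 < P k m" using Pp[of m] SN[OF m] by simp
    show ?thesis by (subst pos_le_divide_eq[OF Ppm]) (use f in \<open>simp add: mult.commute\<close>)
  qed
  obtain y where y: "\<forall>i\<in>S. b i \<le> y i \<and> y i = b i + (\<Sum>l\<in>S. K i l * y l)"
    using lit_limit[OF fS b0 K0 bd] by blast
  have yb: "b i \<le> y i" and ye: "y i = b i + (\<Sum>l\<in>S. K i l * y l)" if "i \<in> S" for i
    using y that by blast+
  define \<pi> where "\<pi> m = (if m = 1 then 1 else y m)" for m
  show ?thesis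
  proof (intro exI[of _ \<pi>] conjI ballI)
    fix m assume m: "m \<in> {1..N}"
    show "0 < \<pi> m"
    proof (cases "m = 1")
      case True then show ?thesis by (simp add: \<pi>_def)
    next
      case False
      then have mS: "m \<in> S" using m unfolding S_def by auto
      have "0 < b m" unfolding b_def using pp[of 1 m k] one m False k Pp[OF m] by auto
      then show ?thesis using yb[OF mS] False by (simp add: \<pi>_def)
    qed
  next
    fix m' assume m': "m' \<in> {1..N}"
    show "(\<Sum>m\<in>{1..N}-{m'}. \<pi> m * p m m' k) = \<pi> m' * P k m'"
    proof (cases "m' = 1")
      case False
      then have mS: "m' \<in> S" using m' unfolding S_def by auto
      have "(\<Sum>m\<in>{1..N}-{m'}. \<pi> m * p m m' k) = \<pi> 1 * p 1 m' k + (\<Sum>m\<in>{1..N}-{m'}-{1}. \<pi> m * p m m' k)"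
        using one False by (subst sum.remove[of _ 1]) auto
      also have "{1..N}-{m'}-{1} = S - {m'}" unfolding S_def by auto
      also have "(\<Sum>m\<in>S-{m'}. \<pi> m * p m m' k) = (\<Sum>m\<in>S-{m'}. p m m' k * y m)"
        by (intro sum.cong refl) (auto simp: \<pi>_def S_def)
      also have "\<pi> 1 * p 1 m' k + (\<Sum>m\<in>S-{m'}. p m m' k * y m) = P k m' * y m'"
        using ye[OF mS] keq[OF mS, of y] Pp[OF m'] unfolding b_def by (simp add: field_simps \<pi>_def)
      finally show ?thesis using False by (simp add: \<pi>_def)
    next
      case True
      have "(\<Sum>m'\<in>S. P k m' * y m') = P k 1 + (\<Sum>m\<in>S. y m * (P k m - p m 1 k))"
        using mass[of y] ye by (metis (no_types, lifting) sum.cong)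
      also have "\<dots> = P k 1 + (\<Sum>m\<in>S. P k m * y m) - (\<Sum>m\<in>S. y m * p m 1 k)"
        by (simp add: right_diff_distrib sum_subtractf mult.commute)
      finally have e: "(\<Sum>m\<in>S. y m * p m 1 k) = P k 1" by simp
      have "(\<Sum>m\<in>{1..N}-{m'}. \<pi> m * p m m' k) = (\<Sum>m\<in>S. y m * p m 1 k)"
        using True by (intro sum.cong) (auto simp: S_def \<pi>_def)
      then show ?thesis using e True by (simp add: \<pi>_def)
    qed
  qed
qed

lemma excursion:
  assumes i: "i \<in> {1..N}"
    and st: "\<forall>m'\<in>{1..N}. (\<Sum>m\<in>{1..N}-{m'}. \<pi> m * p m m' k) = \<pi> m' * P k m'"
    and f: "\<forall>m\<in>{1..N}-{i}. P k m * f m - (\<Sum>l\<in>{1..N}-{m,i}. p m l k * f l) = s m"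
  shows "\<pi> i * (\<Sum>l\<in>{1..N}-{i}. p i l k * f l) = (\<Sum>m\<in>{1..N}-{i}. \<pi> m * s m)"
proof -
  define S where "S = {1..N}-{i}"
  have fS: "finite S" unfolding S_def by auto
  have "(\<Sum>m\<in>S. \<pi> m * s m) = (\<Sum>m\<in>S. \<pi> m * P k m * f m - (\<Sum>l\<in>S-{m}. \<pi> m * p m l k * f l))"
  proof (rule sum.cong[OF refl])
    fix m assume m: "m \<in> S"
    have e: "{1..N}-{m,i} = S - {m}" unfolding S_def by auto
    have "P k m * f m - (\<Sum>l\<in>{1..N}-{m,i}. p m l k * f l) = s m" using f m unfolding S_def by blast
    then have "s m = P k m * f m - (\<Sum>l\<in>S-{m}. p m l k * f l)" unfolding e by simp
    then show "\<pi> m * s m = \<pi> m * P k m * f m - (\<Sum>l\<in>S-{m}. \<pi> m * p m l k * f l)"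
      by (simp add: right_diff_distrib sum_distrib_left mult_ac)
  qed
  also have "\<dots> = (\<Sum>m\<in>S. \<pi> m * P k m * f m) - (\<Sum>m\<in>S. \<Sum>l\<in>S-{m}. \<pi> m * p m l k * f l)"
    by (rule sum_subtractf)
  also have "(\<Sum>m\<in>S. \<Sum>l\<in>S-{m}. \<pi> m * p m l k * f l) = (\<Sum>l\<in>S. \<Sum>m\<in>S-{l}. \<pi> m * p m l k * f l)"
    by (rule sum_swap_ne[OF fS])
  also have "\<dots> = (\<Sum>l\<in>S. f l * (\<pi> l * P k l - \<pi> i * p i l k))"
  proof (rule sum.cong[OF refl])
    fix l assume l: "l \<in> S"
    have lN: "l \<in> {1..N}" "l \<noteq> i" using l unfolding S_def by auto
    have "(\<Sum>m\<in>{1..N}-{l}. \<pi> m * p m l k) = \<pi> i * p i l k + (\<Sum>m\<in>{1..N}-{l}-{i}. \<pi> m * p m l k)"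
      using i lN by (subst sum.remove[of _ i]) auto
    also have "{1..N}-{l}-{i} = S - {l}" unfolding S_def by auto
    finally have "(\<Sum>m\<in>S-{l}. \<pi> m * p m l k) = \<pi> l * P k l - \<pi> i * p i l k"
      using st lN by auto
    then show "(\<Sum>m\<in>S-{l}. \<pi> m * p m l k * f l) = f l * (\<pi> l * P k l - \<pi> i * p i l k)"
      by (simp add: sum_distrib_right[symmetric] mult.commute sum_distrib_left[symmetric])
  qed
  also have "\<dots> = (\<Sum>l\<in>S. \<pi> l * P k l * f l) - \<pi> i * (\<Sum>l\<in>S. p i l k * f l)"
    by (simp add: right_diff_distrib sum_subtractf sum_distrib_left mult_ac)
  finally show ?thesis unfolding S_def by simp
qed

lemma xy_ge2: fixes x y :: real assumes "0 < x" "0 < y" shows "2 \<le> x / y + y / x"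
proof -
  have "0 \<le> (x - y)^2" by simp
  then have "2 * x * y \<le> x * x + y * y" by (simp add: power2_eq_square algebra_simps)
  then show ?thesis using assms by (simp add: field_simps)
qed

lemma pair_bound:
  fixes r :: "nat \<Rightarrow> real"
  assumes i: "i \<in> {1..N}" and r: "\<forall>m\<in>{1..N}. 0 < r m"
  shows "2 < (\<Sum>m\<in>{1..N}-{i}. ((\<Sum>l\<in>{1..N}. r l) - r m) / r m)"
proof -
  define A where "A = (\<Sum>l\<in>{1..N}. r l)"
  have "\<exists>a b. a \<in> {1..N} \<and> b \<in> {1..N} \<and> a \<noteq> b \<and> a \<noteq> i \<and> b \<noteq> i"
  proof (cases "i = 1")
    case True then show ?thesis using N3 by (intro exI[of _ 2] exI[of _ 3]) auto
  next
    case False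
    show ?thesis
    proof (cases "i = 2")
      case True then show ?thesis using N3 by (intro exI[of _ 1] exI[of _ 3]) auto
    next
      case False
      then show ?thesis using N3 \<open>i \<noteq> 1\<close> by (intro exI[of _ 1] exI[of _ 2]) auto
    qed
  qed
  then obtain a b where ab: "a \<in> {1..N}" "b \<in> {1..N}" "a \<noteq> b" "a \<noteq> i" "b \<noteq> i" by blast
  have Ar: "A - r m = (\<Sum>l\<in>{1..N}-{m}. r l)" if "m \<in> {1..N}" for m
    unfolding A_def using that by (subst sum.remove[of _ m]) auto
  have tnn: "0 \<le> (A - r m) / r m" if "m \<in> {1..N}" for m
  proof -
    have "0 \<le> (\<Sum>l\<in>{1..N}-{m}. r l)" using r by (intro sum_nonneg) (auto intro: less_imp_le)
    then have "0 \<le> A - r m" using Ar[OF that] by simp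
    moreover have "0 < r m" using r that by blast
    ultimately show ?thesis by (rule divide_nonneg_pos)
  qed
  have "(\<Sum>m\<in>{a,b}. (A - r m) / r m) \<le> (\<Sum>m\<in>{1..N}-{i}. (A - r m) / r m)"
    using ab tnn by (intro sum_mono2) auto
  moreover have "(\<Sum>m\<in>{a,b}. (A - r m) / r m) = (A - r a) / r a + (A - r b) / r b"
    using ab by simp
  moreover have "r b + r i \<le> A - r a"
  proof -
    have "(\<Sum>l\<in>{b,i}. r l) \<le> (\<Sum>l\<in>{1..N}-{a}. r l)"
      using ab i r by (intro sum_mono2) (auto intro: less_imp_le)
    then show ?thesis using Ar[OF ab(1)] ab by simp
  qed
  moreover have "r a \<le> A - r b"
  proof -
    have "(\<Sum>l\<in>{a}. r l) \<le> (\<Sum>l\<in>{1..N}-{b}. r l)"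
      using ab i r by (intro sum_mono2) (auto intro: less_imp_le)
    then show ?thesis using Ar[OF ab(2)] ab by simp
  qed
  moreover have "r b / r a + r a / r b \<ge> 2" using r ab by (intro xy_ge2) auto
  moreover have "0 < r a" "0 < r b" "0 < r i" using r ab i by auto
  ultimately have "2 < (\<Sum>m\<in>{1..N}-{i}. (A - r m) / r m)"
  proof -
    assume h: "(\<Sum>m\<in>{a,b}. (A - r m) / r m) \<le> (\<Sum>m\<in>{1..N}-{i}. (A - r m) / r m)"
      "(\<Sum>m\<in>{a,b}. (A - r m) / r m) = (A - r a) / r a + (A - r b) / r b"
      "r b + r i \<le> A - r a" "r a \<le> A - r b" "r b / r a + r a / r b \<ge> 2"
      "0 < r a" "0 < r b" "0 < r i"
    have "(r b + r i) / r a \<le> (A - r a) / r a" using h by (intro divide_right_mono) auto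
    moreover have "r a / r b \<le> (A - r b) / r b" using h by (intro divide_right_mono) auto
    moreover have "r b / r a < (r b + r i) / r a" using h by (intro divide_strict_right_mono) auto
    ultimately show ?thesis using h by linarith
  qed
  then show ?thesis unfolding A_def .
qed

end



definition Fm :: "nat \<Rightarrow> (nat \<Rightarrow> nat \<Rightarrow> int \<Rightarrow> real) \<Rightarrow> (nat \<Rightarrow> nat \<Rightarrow> int \<Rightarrow> 'a::real_normed_field) \<Rightarrow> nat \<Rightarrow> nat \<Rightarrow> int \<Rightarrow> 'a" where
  "Fm N p x i j k = of_real (p i j k) + (\<Sum>m\<in>{1..N}-{i,j}. of_real (p i m k) * x m j k)
      + (\<Sum>m\<in>{1..N}-{i}. of_real (p i m (-k)) * x m i (-k) * x i j k)"

context rw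
begin

lemma sum_others_pos:
  fixes r :: "nat \<Rightarrow> real"
  assumes i: "i \<in> {1..N}" and r: "\<forall>m\<in>{1..N}. 0 < r m"
  shows "0 < (\<Sum>m\<in>{1..N}-{i}. r m)"
proof -
  have "\<exists>j. j \<in> {1..N} \<and> j \<noteq> i"
  proof (cases "i = 1")
    case True then show ?thesis using N3 by (intro exI[of _ 2]) auto
  next
    case False then show ?thesis using i by (intro exI[of _ 1]) auto
  qed
  then obtain j where j: "j \<in> {1..N}" "j \<noteq> i" by blast
  have "r j \<le> (\<Sum>m\<in>{1..N}-{i}. r m)" using j r by (intro member_le_sum) (auto intro: less_imp_le)
  then show ?thesis using r j by (meson order_less_le_trans)
qed

lemma vexists:
  "\<exists>v s. \<forall>i j k. arrow_idx N i j k \<longrightarrow> 0 < v i j k \<and> 0 < s k i \<and>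
      P k i * v i j k - (\<Sum>m\<in>{1..N}-{i,j}. p i m k * v m j k) = s k i \<and>
      s k i < (\<Sum>m\<in>{1..N}-{i}. p i m (-k) * v m i (-k))"
proof -
  obtain \<alpha> where \<alpha>: "\<forall>m\<in>{1..N}. 0 < \<alpha> m"
      "\<forall>m'\<in>{1..N}. (\<Sum>m\<in>{1..N}-{m'}. \<alpha> m * p m m' 1) = \<alpha> m' * P 1 m'"
    using stationary[of 1] by auto
  obtain \<beta> where \<beta>: "\<forall>m\<in>{1..N}. 0 < \<beta> m"
      "\<forall>m'\<in>{1..N}. (\<Sum>m\<in>{1..N}-{m'}. \<beta> m * p m m' (-1)) = \<beta> m' * P (-1) m'"
    using stationary[of "-1"] by auto
  define r where "r m = \<beta> m / \<alpha> m" for m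
  define A where "A = (\<Sum>m\<in>{1..N}. r m)"
  have rpos: "\<forall>m\<in>{1..N}. 0 < r m" using \<alpha> \<beta> unfolding r_def by auto
  have Ar: "A - r m = (\<Sum>l\<in>{1..N}-{m}. r l)" if "m \<in> {1..N}" for m
    unfolding A_def using that by (subst sum.remove[of _ m]) auto
  define s where "s k i = (if k = 1 then (A - r i) / \<beta> i else 2 / \<alpha> i)" for k :: int and i
  have spos: "0 < s k i" if "i \<in> {1..N}" for k i
  proof (cases "k = 1")
    case True
    have "0 < A - r i" using Ar[OF that] sum_others_pos[OF that rpos] by simp
    then show ?thesis using True \<beta> that unfolding s_def by auto
  next
    case False then show ?thesis using \<alpha> that unfolding s_def by auto
  qed
  define Q where "Q j k f \<longleftrightarrow> (\<forall>i\<in>{1..N}-{j}. s k i / P k i \<le> f i \<and>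
            P k i * f i - (\<Sum>m\<in>{1..N}-{i,j}. p i m k * f m) = s k i)" for j k f
  define V where "V j k = (SOME f. Q j k f)" for j k
  have VQ: "Q j k (V j k)" if "j \<in> {1..N}" "k \<in> {-1,1}" for j k
  proof -
    have "\<forall>i\<in>{1..N}-{j}. 0 \<le> s k i" using spos by (auto intro: less_imp_le)
    then have "\<exists>f. Q j k f" unfolding Q_def
      using poisson[OF that, of "s k"] by blast
    then show ?thesis unfolding V_def by (rule someI_ex)
  qed
  define v where "v i j k = V j k i" for i j k
  show ?thesis
  proof (intro exI[of _ v] exI[of _ s] allI impI conjI)
    fix i j k assume a: "arrow_idx N i j k"
    then have ijk: "i \<in> {1..N}" "j \<in> {1..N}" "i \<noteq> j" "k \<in> {-1,1}" by (auto simp: arrow_idx_def)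
    have Qj: "Q j k (V j k)" using VQ ijk by auto
    have iin: "i \<in> {1..N}-{j}" using ijk by auto
    show "0 < s k i" using spos ijk by auto
    have "s k i / P k i \<le> v i j k" using Qj iin unfolding Q_def v_def by blast
    moreover have "0 < s k i / P k i" using spos[of i k] P_pos[of i k] ijk by auto
    ultimately show "0 < v i j k" by linarith
    show "P k i * v i j k - (\<Sum>m\<in>{1..N}-{i,j}. p i m k * v m j k) = s k i"
      using Qj iin unfolding Q_def v_def by blast
    have mk: "-k \<in> {-1,1}" using ijk by auto
    have Qi: "Q i (-k) (V i (-k))" using VQ ijk mk by auto
    have fh: "\<forall>m\<in>{1..N}-{i}. P (-k) m * V i (-k) m - (\<Sum>l\<in>{1..N}-{m,i}. p m l (-k) * V i (-k) l) = s (-k) m"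
      using Qi unfolding Q_def by blast
    have E: "(\<Sum>m\<in>{1..N}-{i}. p i m (-k) * v m i (-k)) = (\<Sum>l\<in>{1..N}-{i}. p i l (-k) * V i (-k) l)"
      unfolding v_def ..
    show "s k i < (\<Sum>m\<in>{1..N}-{i}. p i m (-k) * v m i (-k))"
    proof (cases "k = 1")
      case True
      then have mk1: "-k = -1" by simp
      have st: "\<forall>m'\<in>{1..N}. (\<Sum>m\<in>{1..N}-{m'}. \<beta> m * p m m' (-k)) = \<beta> m' * P (-k) m'"
        using \<beta> mk1 by simp
      have ex: "\<beta> i * (\<Sum>l\<in>{1..N}-{i}. p i l (-k) * V i (-k) l) = (\<Sum>m\<in>{1..N}-{i}. \<beta> m * s (-k) m)"
        by (rule excursion[OF ijk(1) st fh])
      have "(\<Sum>m\<in>{1..N}-{i}. \<beta> m * s (-k) m) = (\<Sum>m\<in>{1..N}-{i}. 2 * r m)"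
        using mk1 \<alpha> by (intro sum.cong refl) (auto simp: s_def r_def)
      also have "\<dots> = 2 * (A - r i)" using Ar[OF ijk(1)] by (simp add: sum_distrib_left)
      finally have "\<beta> i * (\<Sum>l\<in>{1..N}-{i}. p i l (-k) * V i (-k) l) = 2 * (A - r i)" using ex by simp
      moreover have "0 < A - r i" using Ar[OF ijk(1)] sum_others_pos[OF ijk(1) rpos] by simp
      moreover have "0 < \<beta> i" using \<beta> ijk by auto
      ultimately have "(\<Sum>l\<in>{1..N}-{i}. p i l (-k) * V i (-k) l) = 2 * (A - r i) / \<beta> i"
        "(A - r i) / \<beta> i < 2 * (A - r i) / \<beta> i"
        by (auto simp: field_simps)
      then show ?thesis unfolding E using True by (simp add: s_def)
    next
      case False
      then have k1: "k = -1" "-k = 1" using ijk by auto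
      have st: "\<forall>m'\<in>{1..N}. (\<Sum>m\<in>{1..N}-{m'}. \<alpha> m * p m m' (-k)) = \<alpha> m' * P (-k) m'"
        using \<alpha> k1 by simp
      have ex: "\<alpha> i * (\<Sum>l\<in>{1..N}-{i}. p i l (-k) * V i (-k) l) = (\<Sum>m\<in>{1..N}-{i}. \<alpha> m * s (-k) m)"
        by (rule excursion[OF ijk(1) st fh])
      have "(\<Sum>m\<in>{1..N}-{i}. \<alpha> m * s (-k) m) = (\<Sum>m\<in>{1..N}-{i}. (A - r m) / r m)"
        using k1 \<alpha> \<beta> by (intro sum.cong refl) (auto simp: s_def r_def)
      also have "\<dots> > 2" using pair_bound[OF ijk(1) rpos] unfolding A_def .
      finally have "2 < \<alpha> i * (\<Sum>l\<in>{1..N}-{i}. p i l (-k) * V i (-k) l)" using ex by simp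
      moreover have "0 < \<alpha> i" using \<alpha> ijk by auto
      ultimately have "2 / \<alpha> i < (\<Sum>l\<in>{1..N}-{i}. p i l (-k) * V i (-k) l)"
        by (simp add: field_simps)
      then show ?thesis unfolding E using k1 by (simp add: s_def)
    qed
  qed
qed

definition Arr where "Arr = {(i,j,k). arrow_idx N i j k}"

lemma finite_Arr: "finite Arr"
proof -
  have "Arr \<subseteq> {1..N} \<times> {1..N} \<times> {-1,1}" unfolding Arr_def arrow_idx_def by auto
  then show ?thesis by (rule finite_subset) auto
qed

lemma Fm_lin:
  fixes v :: "nat \<Rightarrow> nat \<Rightarrow> int \<Rightarrow> real" and \<epsilon> :: real
  assumes a: "arrow_idx N i j k"
    and pois: "P k i * v i j k - (\<Sum>m\<in>{1..N}-{i,j}. p i m k * v m j k) = s"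
  shows "Fm N p (\<lambda>a b c. 1 - \<epsilon> * v a b c) i j k
     = 1 - \<epsilon> * v i j k - \<epsilon> * ((\<Sum>m\<in>{1..N}-{i}. p i m (-k) * v m i (-k)) - s)
       + \<epsilon>^2 * v i j k * (\<Sum>m\<in>{1..N}-{i}. p i m (-k) * v m i (-k))"
proof -
  have ijk: "i \<in> {1..N}" "j \<in> {1..N}" "i \<noteq> j" "k \<in> {-1,1}" using a by (auto simp: arrow_idx_def)
  define Q where "Q = (\<Sum>m\<in>{1..N}-{i,j}. p i m k * v m j k)"
  define E where "E = (\<Sum>m\<in>{1..N}-{i}. p i m (-k) * v m i (-k))"
  have s1: "(\<Sum>m\<in>{1..N}-{i,j}. p i m k * (1 - \<epsilon> * v m j k)) = (P k i - p i j k) - \<epsilon> * Q"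
    unfolding Q_def using P_remove[OF ijk(1,2,3), of k]
    by (simp add: right_diff_distrib sum_subtractf sum_distrib_left mult_ac)
  have s2: "(\<Sum>m\<in>{1..N}-{i}. p i m (-k) * (1 - \<epsilon> * v m i (-k)) * (1 - \<epsilon> * v i j k))
      = (1 - \<epsilon> * v i j k) * (P (-k) i - \<epsilon> * E)"
    unfolding E_def PP_def
    by (simp add: right_diff_distrib sum_subtractf sum_distrib_left sum_distrib_right mult_ac)
  have PQ: "Q = P k i * v i j k - s" using pois unfolding Q_def by simp
  have Ps: "P k i + P (-k) i = 1" using P_sum ijk by auto
  have "Fm N p (\<lambda>a b c. 1 - \<epsilon> * v a b c) i j k
      = p i j k + ((P k i - p i j k) - \<epsilon> * Q) + (1 - \<epsilon> * v i j k) * (P (-k) i - \<epsilon> * E)"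
    unfolding Fm_def using s1 s2 by simp
  also have "\<dots> = 1 - \<epsilon> * v i j k - \<epsilon> * (E - s) + \<epsilon>^2 * v i j k * E"
  proof -
    have Ps': "P (-k) i = 1 - P k i" using Ps by simp
    show ?thesis unfolding PQ Ps' by (simp add: algebra_simps power2_eq_square)
  qed
  finally show ?thesis unfolding E_def .
qed

lemma supersol:
  "\<exists>(u :: nat \<Rightarrow> nat \<Rightarrow> int \<Rightarrow> real) \<rho>. 1 < \<rho> \<and>
     (\<forall>i j k. arrow_idx N i j k \<longrightarrow> 0 \<le> u i j k \<and> u i j k \<le> 1 \<and> \<rho> * Fm N p u i j k \<le> u i j k)"
proof -
  obtain v s where vs: "\<forall>i j k. arrow_idx N i j k \<longrightarrow> 0 < v i j k \<and> 0 < s k i \<and>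
      P k i * v i j k - (\<Sum>m\<in>{1..N}-{i,j}. p i m k * v m j k) = s k i \<and>
      s k i < (\<Sum>m\<in>{1..N}-{i}. p i m (-k) * v m i (-k))"
    using vexists by blast
  define E where "E i k = (\<Sum>m\<in>{1..N}-{i}. p i m (-k) * v m i (-k))" for i k
  define g where "g i k = E i k - s k i" for i k
  have gp: "0 < g i k" "0 < E i k" "0 < v i j k" if "arrow_idx N i j k" for i j k
    using vs that unfolding g_def E_def by force+
  have "\<exists>d>(0::real). \<forall>a\<in>Arr. (\<lambda>(i,j,k) d. d * v i j k \<le> 1 \<and> d * (v i j k * E i k) \<le> g i k / 2) a d"
  proof (rule finite_pos_choice[OF finite_Arr])
    fix a assume "a \<in> Arr"
    then obtain i j k where a: "a = (i,j,k)" "arrow_idx N i j k" unfolding Arr_def by auto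
    have pos: "0 < g i k" "0 < E i k" "0 < v i j k" using gp[OF a(2)] by auto
    show "\<exists>d>0. \<forall>d'. 0 < d' \<and> d' \<le> d \<longrightarrow> (\<lambda>(i,j,k) d. d * v i j k \<le> 1 \<and> d * (v i j k * E i k) \<le> g i k / 2) a d'"
    proof (intro exI[of _ "min (1 / v i j k) (g i k / 2 / (v i j k * E i k))"] conjI allI impI)
      show "0 < min (1 / v i j k) (g i k / 2 / (v i j k * E i k))" using pos by auto
      fix d' assume d': "0 < d' \<and> d' \<le> min (1 / v i j k) (g i k / 2 / (v i j k * E i k))"
      have "d' * v i j k \<le> 1" using d' pos by (auto simp: le_divide_eq)
      moreover have "d' * (v i j k * E i k) \<le> g i k / 2"
      proof -
        have "d' \<le> g i k / 2 / (v i j k * E i k)" using d' by auto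
        then show ?thesis using pos by (simp add: le_divide_eq)
      qed
      ultimately show "(\<lambda>(i,j,k) d. d * v i j k \<le> 1 \<and> d * (v i j k * E i k) \<le> g i k / 2) a d'"
        using a by simp
    qed
  qed
  then obtain \<epsilon> where \<epsilon>: "\<epsilon> > 0" "\<And>i j k. arrow_idx N i j k \<Longrightarrow> \<epsilon> * v i j k \<le> 1 \<and> \<epsilon> * (v i j k * E i k) \<le> g i k / 2"
    unfolding Arr_def by auto
  have "\<exists>d>(0::real). \<forall>a\<in>Arr. (\<lambda>(i,j,k) d. d \<le> g i k) a d"
  proof (rule finite_pos_choice[OF finite_Arr])
    fix a assume "a \<in> Arr"
    then obtain i j k where a: "a = (i,j,k)" "arrow_idx N i j k" unfolding Arr_def by auto
    show "\<exists>d>0. \<forall>d'. 0 < d' \<and> d' \<le> d \<longrightarrow> (\<lambda>(i,j,k) d. d \<le> g i k) a d'"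
      using gp[OF a(2)] a by (intro exI[of _ "g i k"]) auto
  qed
  then obtain \<gamma> where \<gamma>: "\<gamma> > 0" "\<And>i j k. arrow_idx N i j k \<Longrightarrow> \<gamma> \<le> g i k"
    unfolding Arr_def by auto
  define u where "u a b c = 1 - \<epsilon> * v a b c" for a b c
  define \<rho> where "\<rho> = 1 + \<epsilon> * \<gamma> / 2"
  show ?thesis
  proof (intro exI[of _ u] exI[of _ \<rho>] conjI allI impI)
    show "1 < \<rho>" unfolding \<rho>_def using \<epsilon> \<gamma> by simp
    fix i j k assume a: "arrow_idx N i j k"
    have pos: "0 < g i k" "0 < E i k" "0 < v i j k" using gp[OF a] by auto
    show "0 \<le> u i j k" "u i j k \<le> 1" unfolding u_def using \<epsilon>(2)[OF a] \<epsilon>(1) pos by auto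
    have pois: "P k i * v i j k - (\<Sum>m\<in>{1..N}-{i,j}. p i m k * v m j k) = s k i"
      using vs a by blast
    have F: "Fm N p u i j k = u i j k - \<epsilon> * g i k + \<epsilon> * (\<epsilon> * (v i j k * E i k))"
      unfolding u_def Fm_lin[of i j k v "s k i" \<epsilon>, OF a pois]
      by (simp add: g_def E_def power2_eq_square algebra_simps)
    have "\<epsilon> * (\<epsilon> * (v i j k * E i k)) \<le> \<epsilon> * (g i k / 2)"
      using \<epsilon>(2)[OF a] \<epsilon>(1) by (intro mult_left_mono) auto
    then have FY: "Fm N p u i j k \<le> u i j k - \<epsilon> * g i k / 2" unfolding F by simp
    have "0 \<le> \<epsilon> * v i j k" "0 \<le> \<epsilon> * g i k" using \<epsilon>(1) pos by auto
    then have Y1: "u i j k - \<epsilon> * g i k / 2 \<le> 1" unfolding u_def by linarith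
    have "\<rho> * Fm N p u i j k \<le> \<rho> * (u i j k - \<epsilon> * g i k / 2)"
      using FY \<epsilon> \<gamma> unfolding \<rho>_def by (intro mult_left_mono) auto
    also have "\<dots> = (u i j k - \<epsilon> * g i k / 2) + (\<epsilon> * \<gamma> / 2) * (u i j k - \<epsilon> * g i k / 2)"
      unfolding \<rho>_def by (simp add: algebra_simps)
    also have "\<dots> \<le> (u i j k - \<epsilon> * g i k / 2) + (\<epsilon> * \<gamma> / 2) * 1"
      using Y1 \<epsilon> \<gamma> by (intro add_left_mono mult_left_mono) auto
    also have "\<dots> \<le> u i j k"
    proof -
      have "\<epsilon> * \<gamma> \<le> \<epsilon> * g i k" using \<gamma>(2)[OF a] \<epsilon> by (intro mult_left_mono) auto
      then show ?thesis by simp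
    qed
    finally show "\<rho> * Fm N p u i j k \<le> u i j k" .
  qed
qed

end



primrec itf :: "nat \<Rightarrow> (nat \<Rightarrow> nat \<Rightarrow> int \<Rightarrow> real) \<Rightarrow> nat \<Rightarrow> 'a::real_normed_field \<Rightarrow> nat \<Rightarrow> nat \<Rightarrow> int \<Rightarrow> 'a" where
  "itf N p 0 z = (\<lambda>i j k. 0)"
| "itf N p (Suc n) z = (\<lambda>i j k. z * Fm N p (itf N p n z) i j k)"

context rw
begin

lemma arr1: "arrow_idx N i j k \<Longrightarrow> m \<in> {1..N}-{i,j} \<Longrightarrow> arrow_idx N m j k"
  by (auto simp: arrow_idx_def)

lemma arr2: "arrow_idx N i j k \<Longrightarrow> m \<in> {1..N}-{i} \<Longrightarrow> arrow_idx N m i (-k)"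
  by (auto simp: arrow_idx_def)

lemma p_nn: "arrow_idx N i j k \<Longrightarrow> 0 \<le> p i j k"
  using ppos by (auto intro: less_imp_le)

lemma Fm_diff_bound:
  fixes X Y :: "nat \<Rightarrow> nat \<Rightarrow> int \<Rightarrow> 'a::real_normed_field" and TX TY :: "nat \<Rightarrow> nat \<Rightarrow> int \<Rightarrow> real"
  assumes hX: "\<And>a b c. arrow_idx N a b c \<Longrightarrow> norm (X a b c) \<le> TX a b c"
    and hY: "\<And>a b c. arrow_idx N a b c \<Longrightarrow> norm (Y a b c) \<le> TY a b c"
    and hD: "\<And>a b c. arrow_idx N a b c \<Longrightarrow> norm (X a b c - Y a b c) \<le> TX a b c - TY a b c"
    and a: "arrow_idx N i j k"
  shows "norm (Fm N p X i j k - Fm N p Y i j k) \<le> Fm N p TX i j k - Fm N p TY i j k"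
proof -
  let ?A1 = "{1..N}-{i,j}" and ?A2 = "{1..N}-{i}"
  have e: "Fm N p X i j k - Fm N p Y i j k =
      (\<Sum>m\<in>?A1. of_real (p i m k) * (X m j k - Y m j k)) +
      (\<Sum>m\<in>?A2. of_real (p i m (-k)) * (X m i (-k) * X i j k - Y m i (-k) * Y i j k))"
    unfolding Fm_def by (simp add: right_diff_distrib sum_subtractf mult.assoc)
  have eT: "Fm N p TX i j k - Fm N p TY i j k =
      (\<Sum>m\<in>?A1. p i m k * (TX m j k - TY m j k)) +
      (\<Sum>m\<in>?A2. p i m (-k) * (TX m i (-k) * TX i j k - TY m i (-k) * TY i j k))"
    unfolding Fm_def by (simp add: right_diff_distrib sum_subtractf mult.assoc)
  have b1: "norm (\<Sum>m\<in>?A1. of_real (p i m k) * (X m j k - Y m j k)) \<le> (\<Sum>m\<in>?A1. p i m k * (TX m j k - TY m j k))"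
  proof -
    have "norm (\<Sum>m\<in>?A1. of_real (p i m k) * (X m j k - Y m j k)) \<le> (\<Sum>m\<in>?A1. norm (of_real (p i m k) * (X m j k - Y m j k)))"
      by (rule norm_sum)
    also have "\<dots> \<le> (\<Sum>m\<in>?A1. p i m k * (TX m j k - TY m j k))"
    proof (rule sum_mono)
      fix m assume m: "m \<in> ?A1"
      have am: "arrow_idx N m j k" using arr1[OF a m] .
      have pn: "0 \<le> p i m k" using p_nn arr1 a m by (auto simp: arrow_idx_def)
      show "norm (of_real (p i m k) * (X m j k - Y m j k)) \<le> p i m k * (TX m j k - TY m j k)"
        unfolding norm_mult norm_of_real using pn hD[OF am] by (simp add: mult_left_mono)
    qed
    finally show ?thesis .
  qed
  have b2: "norm (\<Sum>m\<in>?A2. of_real (p i m (-k)) * (X m i (-k) * X i j k - Y m i (-k) * Y i j k))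
      \<le> (\<Sum>m\<in>?A2. p i m (-k) * (TX m i (-k) * TX i j k - TY m i (-k) * TY i j k))"
  proof -
    have "norm (\<Sum>m\<in>?A2. of_real (p i m (-k)) * (X m i (-k) * X i j k - Y m i (-k) * Y i j k))
        \<le> (\<Sum>m\<in>?A2. norm (of_real (p i m (-k)) * (X m i (-k) * X i j k - Y m i (-k) * Y i j k)))"
      by (rule norm_sum)
    also have "\<dots> \<le> (\<Sum>m\<in>?A2. p i m (-k) * (TX m i (-k) * TX i j k - TY m i (-k) * TY i j k))"
    proof (rule sum_mono)
      fix m assume m: "m \<in> ?A2"
      have am: "arrow_idx N m i (-k)" using arr2[OF a m] .
      have pn: "0 \<le> p i m (-k)" using p_nn am a m by (auto simp: arrow_idx_def)
      have "X m i (-k) * X i j k - Y m i (-k) * Y i j k = X m i (-k) * (X i j k - Y i j k) + (X m i (-k) - Y m i (-k)) * Y i j k"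
        by (simp add: algebra_simps)
      then have "norm (X m i (-k) * X i j k - Y m i (-k) * Y i j k) \<le> norm (X m i (-k)) * norm (X i j k - Y i j k) + norm (X m i (-k) - Y m i (-k)) * norm (Y i j k)"
        by (metis norm_mult norm_triangle_ineq)
      also have "\<dots> \<le> TX m i (-k) * (TX i j k - TY i j k) + (TX m i (-k) - TY m i (-k)) * TY i j k"
      proof (rule add_mono)
        show "norm (X m i (-k)) * norm (X i j k - Y i j k) \<le> TX m i (-k) * (TX i j k - TY i j k)"
          using hX[OF am] hD[OF a] by (intro mult_mono) (auto intro: order_trans[OF norm_ge_zero])
        show "norm (X m i (-k) - Y m i (-k)) * norm (Y i j k) \<le> (TX m i (-k) - TY m i (-k)) * TY i j k"
        proof -
          have "0 \<le> TX m i (-k) - TY m i (-k)" using hD[OF am] norm_ge_zero order_trans by blast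
          then show ?thesis using hY[OF a] hD[OF am] by (intro mult_mono) auto
        qed
      qed
      also have "\<dots> = TX m i (-k) * TX i j k - TY m i (-k) * TY i j k" by (simp add: algebra_simps)
      finally show "norm (of_real (p i m (-k)) * (X m i (-k) * X i j k - Y m i (-k) * Y i j k)) \<le> p i m (-k) * (TX m i (-k) * TX i j k - TY m i (-k) * TY i j k)"
        unfolding norm_mult norm_of_real using pn by (simp add: mult_left_mono)
    qed
    finally show ?thesis .
  qed
  show ?thesis unfolding e eT using b1 b2 norm_triangle_le by (meson add_mono norm_triangle_ineq order_trans)
qed

lemma itf_bound:
  fixes z :: "'a::real_normed_field" and t :: real
  assumes zt: "norm z \<le> t"
  shows "\<forall>a b c. arrow_idx N a b c \<longrightarrow> norm (itf N p n z a b c) \<le> itf N p n t a b c \<and>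
     norm (itf N p (Suc n) z a b c - itf N p n z a b c) \<le> itf N p (Suc n) t a b c - itf N p n t a b c"
proof (induction n)
  case 0
  show ?case
  proof (intro allI impI conjI)
    fix a b c assume abc: "arrow_idx N a b c"
    show "norm (itf N p 0 z a b c) \<le> itf N p 0 t a b c" by simp
    have pn: "0 \<le> p a b c" using p_nn[OF abc] .
    show "norm (itf N p (Suc 0) z a b c - itf N p 0 z a b c) \<le> itf N p (Suc 0) t a b c - itf N p 0 t a b c"
      using zt pn by (simp add: Fm_def norm_mult mult_right_mono)
  qed
next
  case (Suc n)
  let ?X = "itf N p (Suc n) z" and ?Y = "itf N p n z"
  let ?TX = "itf N p (Suc n) t" and ?TY = "itf N p n t"
  have hY: "\<And>a b c. arrow_idx N a b c \<Longrightarrow> norm (?Y a b c) \<le> ?TY a b c"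
    and hD: "\<And>a b c. arrow_idx N a b c \<Longrightarrow> norm (?X a b c - ?Y a b c) \<le> ?TX a b c - ?TY a b c"
    using Suc by blast+
  have hX: "norm (?X a b c) \<le> ?TX a b c" if abc: "arrow_idx N a b c" for a b c
  proof -
    have "norm (?X a b c) \<le> norm (?X a b c - ?Y a b c) + norm (?Y a b c)"
      by (metis diff_add_cancel norm_triangle_ineq)
    then show ?thesis using hY[OF abc] hD[OF abc] by linarith
  qed
  show ?case
  proof (intro allI impI conjI)
    fix a b c assume abc: "arrow_idx N a b c"
    show "norm (?X a b c) \<le> ?TX a b c" using hX[OF abc] .
    have fd: "norm (Fm N p ?X a b c - Fm N p ?Y a b c) \<le> Fm N p ?TX a b c - Fm N p ?TY a b c"
      by (rule Fm_diff_bound[OF hX hY hD abc])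
    have "norm (itf N p (Suc (Suc n)) z a b c - ?X a b c) = norm z * norm (Fm N p ?X a b c - Fm N p ?Y a b c)"
      by (simp add: right_diff_distrib[symmetric] norm_mult)
    also have "\<dots> \<le> t * (Fm N p ?TX a b c - Fm N p ?TY a b c)"
      using zt fd by (intro mult_mono) (auto intro: order_trans[OF norm_ge_zero])
    also have "\<dots> = itf N p (Suc (Suc n)) t a b c - ?TX a b c"
      by (simp add: right_diff_distrib)
    finally show "norm (itf N p (Suc (Suc n)) z a b c - ?X a b c) \<le> itf N p (Suc (Suc n)) t a b c - ?TX a b c" .
  qed
qed

lemma itf_real_nn:
  fixes t :: real
  assumes "0 \<le> t" "arrow_idx N a b c"
  shows "0 \<le> itf N p n t a b c" "itf N p n t a b c \<le> itf N p (Suc n) t a b c"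
proof -
  have h: "norm (itf N p n t a b c) \<le> itf N p n t a b c \<and>
     norm (itf N p (Suc n) t a b c - itf N p n t a b c) \<le> itf N p (Suc n) t a b c - itf N p n t a b c"
    using itf_bound[of t t n] assms by auto
  then show "0 \<le> itf N p n t a b c" using norm_ge_zero order_trans by blast
  show "itf N p n t a b c \<le> itf N p (Suc n) t a b c" using h norm_ge_zero[of "itf N p (Suc n) t a b c - itf N p n t a b c"] by linarith
qed

lemma itf_tele:
  fixes z :: "'a::real_normed_field" and t :: real
  assumes zt: "norm z \<le> t" and abc: "arrow_idx N a b c"
  shows "norm (itf N p (n + d) z a b c - itf N p n z a b c) \<le> itf N p (n + d) t a b c - itf N p n t a b c"
proof (induction d)
  case 0 then show ?case by simp
next
  case (Suc d)
  have "norm (itf N p (n + Suc d) z a b c - itf N p n z a b c)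
      \<le> norm (itf N p (Suc (n + d)) z a b c - itf N p (n + d) z a b c) + norm (itf N p (n + d) z a b c - itf N p n z a b c)"
    by (metis add_Suc_right diff_add_cancel norm_triangle_ineq add_diff_eq)
  also have "\<dots> \<le> (itf N p (Suc (n + d)) t a b c - itf N p (n + d) t a b c) + (itf N p (n + d) t a b c - itf N p n t a b c)"
    using itf_bound[OF zt, of "n + d"] abc Suc by (intro add_mono) auto
  finally show ?case by simp
qed

lemma Fm_mono:
  fixes X Y :: "nat \<Rightarrow> nat \<Rightarrow> int \<Rightarrow> real"
  assumes "\<And>a b c. arrow_idx N a b c \<Longrightarrow> 0 \<le> X a b c"
    and "\<And>a b c. arrow_idx N a b c \<Longrightarrow> X a b c \<le> Y a b c"
    and a: "arrow_idx N i j k"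
  shows "Fm N p X i j k \<le> Fm N p Y i j k"
proof -
  have "norm (Fm N p Y i j k - Fm N p X i j k) \<le> Fm N p Y i j k - Fm N p X i j k"
  proof (rule Fm_diff_bound[OF _ _ _ a])
    fix a b c assume abc: "arrow_idx N a b c"
    show "norm (Y a b c) \<le> Y a b c" "norm (X a b c) \<le> X a b c" "norm (Y a b c - X a b c) \<le> Y a b c - X a b c"
      using assms(1,2)[OF abc] by auto
  qed
  then show ?thesis using norm_ge_zero[of "Fm N p Y i j k - Fm N p X i j k"] by linarith
qed

lemma Fm_of_real:
  "Fm N p (\<lambda>a b c. (of_real (X a b c) :: 'a::real_normed_field)) i j k = of_real (Fm N p X i j k)"
  unfolding Fm_def by (simp add: of_real_sum)

lemma itf_of_real: "itf N p n (of_real t :: 'a::real_normed_field) = (\<lambda>a b c. of_real (itf N p n t a b c))"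
proof (induction n)
  case 0 then show ?case by (simp add: fun_eq_iff)
next
  case (Suc n) then show ?case by (simp only: itf.simps Suc.IH Fm_of_real of_real_mult)
qed

lemma itf_holo: "\<forall>a b c. (\<lambda>z::complex. itf N p n z a b c) holomorphic_on UNIV"
proof (induction n)
  case 0 then show ?case by simp
next
  case (Suc n)
  show ?case unfolding itf.simps Fm_def using Suc by (auto intro!: holomorphic_intros)
qed

lemma Fm_nn:
  fixes X :: "nat \<Rightarrow> nat \<Rightarrow> int \<Rightarrow> real"
  assumes "\<And>a b c. arrow_idx N a b c \<Longrightarrow> 0 \<le> X a b c" and a: "arrow_idx N i j k"
  shows "0 \<le> Fm N p X i j k"
proof -
  have "Fm N p (\<lambda>_ _ _. 0) i j k \<le> Fm N p X i j k" using assms by (intro Fm_mono) auto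
  moreover have "Fm N p (\<lambda>_ _ _. 0::real) i j k = p i j k" by (simp add: Fm_def)
  ultimately show ?thesis using p_nn[OF a] by simp
qed

lemma itf_le_u:
  fixes u :: "nat \<Rightarrow> nat \<Rightarrow> int \<Rightarrow> real" and t \<rho> :: real
  assumes u: "\<And>a b c. arrow_idx N a b c \<Longrightarrow> 0 \<le> u a b c \<and> \<rho> * Fm N p u a b c \<le> u a b c"
    and t: "0 \<le> t" "t \<le> \<rho>"
  shows "\<forall>a b c. arrow_idx N a b c \<longrightarrow> itf N p n t a b c \<le> u a b c"
proof (induction n)
  case 0 then show ?case using u by simp
next
  case (Suc n)
  show ?case
  proof (intro allI impI)
    fix a b c assume abc: "arrow_idx N a b c"
    have m: "Fm N p (itf N p n t) a b c \<le> Fm N p u a b c"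
      using Suc itf_real_nn[OF t(1)] abc by (intro Fm_mono) auto
    have fn: "0 \<le> Fm N p u a b c" using u abc by (intro Fm_nn) auto
    have "itf N p (Suc n) t a b c = t * Fm N p (itf N p n t) a b c" by simp
    also have "\<dots> \<le> t * Fm N p u a b c" using m t by (intro mult_left_mono) auto
    also have "\<dots> \<le> \<rho> * Fm N p u a b c" using t fn by (intro mult_right_mono) auto
    also have "\<dots> \<le> u a b c" using u abc by auto
    finally show "itf N p (Suc n) t a b c \<le> u a b c" .
  qed
qed

lemma exist: "\<exists>eps>0. \<exists>R. R_family N p eps R"
proof -
  obtain u :: "nat \<Rightarrow> nat \<Rightarrow> int \<Rightarrow> real" and \<rho> :: real where \<rho>: "1 < \<rho>" and u: "\<forall>i j k. arrow_idx N i j k \<longrightarrow> 0 \<le> u i j k \<and> u i j k \<le> 1 \<and> \<rho> * Fm N p u i j k \<le> u i j k"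
    using supersol by blast
  have u': "\<And>a b c. arrow_idx N a b c \<Longrightarrow> 0 \<le> u a b c \<and> \<rho> * Fm N p u a b c \<le> u a b c" using u by blast
  define R where "R i j k = (\<lambda>z::complex. lim (\<lambda>n. itf N p n z i j k))" for i j k
  have rconv: "\<exists>L. (\<lambda>n. itf N p n t a b c) \<longlonglongrightarrow> L \<and> (\<forall>n. itf N p n t a b c \<le> L)"
    if abc: "arrow_idx N a b c" and t: "0 \<le> t" "t \<le> \<rho>" for a b c t
  proof -
    have inc: "incseq (\<lambda>n. itf N p n t a b c)" using itf_real_nn[OF t(1) abc] by (intro incseq_SucI) auto
    have "\<forall>n. itf N p n t a b c \<le> u a b c" using itf_le_u[OF u' t] abc by blast
    from incseq_convergent[OF inc this] show ?thesis by blast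
  qed
  have ulim: "uniform_limit (cball 0 \<rho>) (\<lambda>n z. itf N p n z a b c) (R a b c) sequentially"
    if abc: "arrow_idx N a b c" for a b c
  proof -
    obtain L where L: "(\<lambda>n. itf N p n \<rho> a b c) \<longlonglongrightarrow> L" using rconv[OF abc, of \<rho>] \<rho> by auto
    have C: "Cauchy (\<lambda>n. itf N p n \<rho> a b c)" using L by (rule LIMSEQ_imp_Cauchy)
    have bd: "norm (itf N p m z a b c - itf N p n z a b c) \<le> dist (itf N p m \<rho> a b c) (itf N p n \<rho> a b c)"
      if z: "z \<in> cball 0 \<rho>" for z :: complex and m n
    proof -
      have zr: "norm z \<le> \<rho>" using z by auto
      show ?thesis
      proof (cases "n \<le> m")
        case True
        then obtain d where d: "m = n + d" using le_Suc_ex by blast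
        show ?thesis using itf_tele[OF zr abc, of n d] unfolding d dist_real_def by linarith
      next
        case False
        then have "m \<le> n" by simp
        then obtain d where d: "n = m + d" using le_Suc_ex by blast
        show ?thesis using itf_tele[OF zr abc, of m d] unfolding d dist_real_def
          by (simp add: norm_minus_commute)
      qed
    qed
    have "uniformly_Cauchy_on (cball 0 \<rho>) (\<lambda>n (z::complex). itf N p n z a b c)"
      unfolding uniformly_Cauchy_on_def
    proof (intro allI impI)
      fix e :: real assume e: "0 < e"
      obtain M where M: "\<forall>m\<ge>M. \<forall>n\<ge>M. dist (itf N p m \<rho> a b c) (itf N p n \<rho> a b c) < e"
        using C e unfolding Cauchy_def by blast
      show "\<exists>M. \<forall>x\<in>(cball 0 \<rho> :: complex set). \<forall>m\<ge>M. \<forall>n\<ge>M. dist (itf N p m x a b c) (itf N p n x a b c) < e"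
      proof (intro exI[of _ M] ballI allI impI)
        fix x :: complex and m n assume x: "x \<in> cball 0 \<rho>" and mn: "M \<le> m" "M \<le> n"
        have "dist (itf N p m x a b c) (itf N p n x a b c) \<le> dist (itf N p m \<rho> a b c) (itf N p n \<rho> a b c)"
          using bd[OF x, of m n] by (simp add: dist_norm)
        also have "\<dots> < e" using M mn by blast
        finally show "dist (itf N p m x a b c) (itf N p n x a b c) < e" .
      qed
    qed
    then have "uniformly_convergent_on (cball 0 \<rho>) (\<lambda>n (z::complex). itf N p n z a b c)"
      by (rule Cauchy_uniformly_convergent)
    then show ?thesis unfolding uniformly_convergent_uniform_limit_iff R_def .
  qed
  have pw: "(\<lambda>n. itf N p n z a b c) \<longlonglongrightarrow> R a b c z" if "arrow_idx N a b c" "z \<in> cball 0 \<rho>" for a b c z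
    using tendsto_uniform_limitI[OF ulim[OF that(1)] that(2)] .
  have holo: "R a b c holomorphic_on ball 0 \<rho>" if abc: "arrow_idx N a b c" for a b c
  proof -
    have ev: "\<forall>\<^sub>F n in sequentially. continuous_on (cball 0 \<rho>) (\<lambda>z::complex. itf N p n z a b c) \<and> (\<lambda>z::complex. itf N p n z a b c) holomorphic_on ball 0 \<rho>"
    proof (intro always_eventually allI conjI)
      fix n
      have h: "(\<lambda>z::complex. itf N p n z a b c) holomorphic_on UNIV" using itf_holo by blast
      show "(\<lambda>z::complex. itf N p n z a b c) holomorphic_on ball 0 \<rho>" by (rule holomorphic_on_subset[OF h]) simp
      show "continuous_on (cball 0 \<rho>) (\<lambda>z::complex. itf N p n z a b c)"
        by (rule continuous_on_subset[OF holomorphic_on_imp_continuous_on[OF h]]) simp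
    qed
    show ?thesis using holomorphic_uniform_limit[OF ev ulim[OF abc]] by auto
  qed
  show ?thesis
  proof (intro exI[of _ "\<rho> - 1"] exI[of _ R] conjI)
    show "0 < \<rho> - 1" using \<rho> by simp
    show "R_family N p (\<rho> - 1) R" unfolding R_family_def
    proof (intro conjI allI impI ballI)
      fix i j k assume a: "arrow_idx N i j k"
      show "R i j k holomorphic_on ball 0 (1 + (\<rho> - 1))" using holo[OF a] by simp
    next
      fix i j k and l :: real assume a: "arrow_idx N i j k" and l: "0 < l \<and> l \<le> 1"
      have l0: "0 \<le> l" "l \<le> \<rho>" using l \<rho> by auto
      obtain L where L: "(\<lambda>n. itf N p n l i j k) \<longlonglongrightarrow> L" "\<forall>n. itf N p n l i j k \<le> L"
        using rconv[OF a l0] by blast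
      have "(\<lambda>n. itf N p n (complex_of_real l) i j k) \<longlonglongrightarrow> complex_of_real L"
        unfolding itf_of_real using L(1) by (rule tendsto_of_real)
      moreover have "(\<lambda>n. itf N p n (complex_of_real l) i j k) \<longlonglongrightarrow> R i j k (complex_of_real l)"
        using pw[OF a] l0 by auto
      ultimately have RL: "R i j k (complex_of_real l) = complex_of_real L" by (metis LIMSEQ_unique)
      have "itf N p (Suc 0) l i j k = l * p i j k" by (simp add: Fm_def)
      moreover have "0 < p i j k" using ppos[OF a] by simp
      ultimately have "0 < itf N p (Suc 0) l i j k" using l by simp
      then have L0: "0 < L" using L(2) by (meson order_less_le_trans)
      have Lb: "L \<le> 1 / \<rho>"
      proof (rule LIMSEQ_le_const2)
        show "(\<lambda>n. itf N p (Suc n) l i j k) \<longlonglongrightarrow> L" using L(1) by (rule LIMSEQ_Suc)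
        show "\<exists>N'. \<forall>n\<ge>N'. itf N p (Suc n) l i j k \<le> 1 / \<rho>"
        proof (intro exI allI impI)
          fix n
          have m: "Fm N p (itf N p n l) i j k \<le> Fm N p u i j k"
            using itf_le_u[OF u' l0] itf_real_nn[OF l0(1)] a by (intro Fm_mono) auto
          have fn: "0 \<le> Fm N p (itf N p n l) i j k" using itf_real_nn[OF l0(1)] a by (intro Fm_nn) auto
          have "itf N p (Suc n) l i j k = l * Fm N p (itf N p n l) i j k" by simp
          also have "\<dots> \<le> Fm N p (itf N p n l) i j k" using l fn mult_right_mono[of l 1 "Fm N p (itf N p n l) i j k"] by simp
          also have "\<dots> \<le> Fm N p u i j k" by (rule m)
          also have "\<dots> \<le> 1 / \<rho>"
          proof -
            have "\<rho> * Fm N p u i j k \<le> u i j k" "u i j k \<le> 1" using u a by blast+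
            then have "\<rho> * Fm N p u i j k \<le> 1" by linarith
            then show ?thesis using \<rho> by (simp add: le_divide_eq mult.commute)
          qed
          finally show "itf N p (Suc n) l i j k \<le> 1 / \<rho>" .
        qed
      qed
      have "1 / \<rho> < 1" using \<rho> by simp
      then have "L < 1" using Lb by linarith
      then show "\<exists>r. 0 < r \<and> r < 1 \<and> R i j k (complex_of_real l) = complex_of_real r"
        using L0 RL by blast
    next
      fix i j k and z :: complex assume a: "arrow_idx N i j k" and z: "z \<in> ball 0 (1 + (\<rho> - 1))"
      have zc: "z \<in> cball 0 \<rho>" using z by auto
      have t1: "(\<lambda>n. itf N p (Suc n) z i j k) \<longlonglongrightarrow> R i j k z" using pw[OF a zc] by (rule LIMSEQ_Suc)
      have t2: "(\<lambda>n. itf N p (Suc n) z i j k) \<longlonglongrightarrow> z * Fm N p (\<lambda>a b c. R a b c z) i j k"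
        unfolding itf.simps Fm_def
        using pw[OF a zc] pw[OF arr1[OF a] zc] pw[OF arr2[OF a] zc]
        by (intro tendsto_intros tendsto_sum) auto
      have "R i j k z = z * Fm N p (\<lambda>a b c. R a b c z) i j k" using LIMSEQ_unique[OF t1 t2] .
      then show "R i j k z = z * (complex_of_real (p i j k) + (\<Sum>m\<in>{1..N} - {i, j}. complex_of_real (p i m k) * R m j k z) +
              (\<Sum>m\<in>{1..N} - {i}. complex_of_real (p i m (- k)) * R m i (- k) z * R i j k z))"
        unfolding Fm_def .
    qed
  qed
qed

lemma sum_A1_le: assumes a: "arrow_idx N i j k" shows "(\<Sum>m\<in>{1..N}-{i,j}. p i m k) \<le> 1"
proof -
  have ijk: "i \<in> {1..N}" "j \<in> {1..N}" "i \<noteq> j" "k \<in> {-1,1}" using a by (auto simp: arrow_idx_def)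
  have "0 \<le> P (-k) i" using P_pos[of i "-k"] ijk by auto
  moreover have "0 \<le> p i j k" using p_nn[OF a] .
  ultimately show ?thesis using P_remove[OF ijk(1,2,3), of k] P_sum[OF ijk(1,4)] by linarith
qed

lemma sum_A2_le: assumes a: "arrow_idx N i j k" shows "(\<Sum>m\<in>{1..N}-{i}. p i m (-k)) \<le> 1"
proof -
  have ijk: "i \<in> {1..N}" "j \<in> {1..N}" "i \<noteq> j" "k \<in> {-1,1}" using a by (auto simp: arrow_idx_def)
  have "0 \<le> P k i" using P_pos[of i k] ijk by auto
  then show ?thesis using P_sum[OF ijk(1,4)] unfolding PP_def by linarith
qed

lemma Fm_lip:
  fixes X Y :: "nat \<Rightarrow> nat \<Rightarrow> int \<Rightarrow> complex"
  assumes hX: "\<And>a b c. arrow_idx N a b c \<Longrightarrow> norm (X a b c) \<le> 1"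
    and hY: "\<And>a b c. arrow_idx N a b c \<Longrightarrow> norm (Y a b c) \<le> 1"
    and hD: "\<And>a b c. arrow_idx N a b c \<Longrightarrow> norm (X a b c - Y a b c) \<le> S"
    and a: "arrow_idx N i j k"
  shows "norm (Fm N p X i j k - Fm N p Y i j k) \<le> 3 * S"
proof -
  let ?A1 = "{1..N}-{i,j}" and ?A2 = "{1..N}-{i}"
  have S0: "0 \<le> S" using hD[OF a] norm_ge_zero order_trans by blast
  have e: "Fm N p X i j k - Fm N p Y i j k =
      (\<Sum>m\<in>?A1. of_real (p i m k) * (X m j k - Y m j k)) +
      (\<Sum>m\<in>?A2. of_real (p i m (-k)) * (X m i (-k) * X i j k - Y m i (-k) * Y i j k))"
    unfolding Fm_def by (simp add: right_diff_distrib sum_subtractf mult.assoc)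
  have b1: "norm (\<Sum>m\<in>?A1. of_real (p i m k) * (X m j k - Y m j k)) \<le> S"
  proof -
    have "norm (\<Sum>m\<in>?A1. of_real (p i m k) * (X m j k - Y m j k)) \<le> (\<Sum>m\<in>?A1. norm (of_real (p i m k) * (X m j k - Y m j k)))"
      by (rule norm_sum)
    also have "\<dots> \<le> (\<Sum>m\<in>?A1. p i m k * S)"
    proof (rule sum_mono)
      fix m assume m: "m \<in> ?A1"
      have am: "arrow_idx N m j k" using arr1[OF a m] .
      have pn: "0 \<le> p i m k" using p_nn arr1 a m by (auto simp: arrow_idx_def)
      show "norm (of_real (p i m k) * (X m j k - Y m j k)) \<le> p i m k * S"
        unfolding norm_mult norm_of_real using pn hD[OF am] by (simp add: mult_left_mono)
    qed
    also have "\<dots> = (\<Sum>m\<in>?A1. p i m k) * S" by (simp add: sum_distrib_right)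
    also have "\<dots> \<le> 1 * S" using sum_A1_le[OF a] S0 by (intro mult_right_mono) auto
    finally show ?thesis by simp
  qed
  have b2: "norm (\<Sum>m\<in>?A2. of_real (p i m (-k)) * (X m i (-k) * X i j k - Y m i (-k) * Y i j k)) \<le> 2 * S"
  proof -
    have "norm (\<Sum>m\<in>?A2. of_real (p i m (-k)) * (X m i (-k) * X i j k - Y m i (-k) * Y i j k))
        \<le> (\<Sum>m\<in>?A2. norm (of_real (p i m (-k)) * (X m i (-k) * X i j k - Y m i (-k) * Y i j k)))"
      by (rule norm_sum)
    also have "\<dots> \<le> (\<Sum>m\<in>?A2. p i m (-k) * (2 * S))"
    proof (rule sum_mono)
      fix m assume m: "m \<in> ?A2"
      have am: "arrow_idx N m i (-k)" using arr2[OF a m] .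
      have pn: "0 \<le> p i m (-k)" using p_nn am a m by (auto simp: arrow_idx_def)
      have "X m i (-k) * X i j k - Y m i (-k) * Y i j k = X m i (-k) * (X i j k - Y i j k) + (X m i (-k) - Y m i (-k)) * Y i j k"
        by (simp add: algebra_simps)
      then have "norm (X m i (-k) * X i j k - Y m i (-k) * Y i j k) \<le> norm (X m i (-k)) * norm (X i j k - Y i j k) + norm (X m i (-k) - Y m i (-k)) * norm (Y i j k)"
        by (metis norm_mult norm_triangle_ineq)
      also have "\<dots> \<le> 1 * S + S * 1"
      proof (rule add_mono)
        show "norm (X m i (-k)) * norm (X i j k - Y i j k) \<le> 1 * S"
          using hX[OF am] hD[OF a] by (intro mult_mono) auto
        show "norm (X m i (-k) - Y m i (-k)) * norm (Y i j k) \<le> S * 1"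
          using hY[OF a] hD[OF am] S0 by (intro mult_mono) auto
      qed
      finally show "norm (of_real (p i m (-k)) * (X m i (-k) * X i j k - Y m i (-k) * Y i j k)) \<le> p i m (-k) * (2 * S)"
        unfolding norm_mult norm_of_real using pn by (simp add: mult_left_mono)
    qed
    also have "\<dots> = (\<Sum>m\<in>?A2. p i m (-k)) * (2 * S)" by (simp add: sum_distrib_right)
    also have "\<dots> \<le> 1 * (2 * S)" using sum_A2_le[OF a] S0 by (intro mult_right_mono) auto
    finally show ?thesis by simp
  qed
  have "norm ((\<Sum>m\<in>?A1. of_real (p i m k) * (X m j k - Y m j k)) +
      (\<Sum>m\<in>?A2. of_real (p i m (-k)) * (X m i (-k) * X i j k - Y m i (-k) * Y i j k)))
    \<le> norm (\<Sum>m\<in>?A1. of_real (p i m k) * (X m j k - Y m j k)) +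
      norm (\<Sum>m\<in>?A2. of_real (p i m (-k)) * (X m i (-k) * X i j k - Y m i (-k) * Y i j k))"
    by (rule norm_triangle_ineq)
  then show ?thesis unfolding e using b1 b2 by linarith
qed

lemma unique:
  assumes R: "R_family N p eps R" and R': "R_family N p eps R'"
    and a: "arrow_idx N i j k" and z: "z \<in> ball 0 (1 + eps)"
  shows "R' i j k z = R i j k z"
proof -
  define B where "B = ball (0::complex) (1 + eps)"
  have e0: "0 < 1 + eps" using z norm_ge_zero[of z] by (simp, linarith)
  have B0: "0 \<in> B" unfolding B_def using e0 by simp
  have h1: "\<forall>i j k. arrow_idx N i j k \<longrightarrow> R i j k holomorphic_on B"
    using R unfolding R_family_def B_def by (rule conjunct1)
  have h2: "\<forall>i j k. arrow_idx N i j k \<longrightarrow> R' i j k holomorphic_on B"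
    using R' unfolding R_family_def B_def by (rule conjunct1)
  have hol: "R a b c holomorphic_on B \<and> R' a b c holomorphic_on B" if "arrow_idx N a b c" for a b c
    using h1 h2 that by blast
  have eqR: "R a b c w = w * Fm N p (\<lambda>a b c. R a b c w) a b c" if "arrow_idx N a b c" "w \<in> B" for a b c w
    using R that unfolding R_family_def Fm_def B_def by blast
  have eqR': "R' a b c w = w * Fm N p (\<lambda>a b c. R' a b c w) a b c" if "arrow_idx N a b c" "w \<in> B" for a b c w
    using R' that unfolding R_family_def Fm_def B_def by blast
  have cont: "isCont (R a b c) w" "isCont (R' a b c) w" if "arrow_idx N a b c" "w \<in> B" for a b c w
    using hol[OF that(1)] that(2) holomorphic_on_imp_continuous_on continuous_on_eq_continuous_at[of B]
    unfolding B_def by (meson open_ball)+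
  let ?r = "\<lambda>x w. R (fst x) (fst (snd x)) (snd (snd x)) w"
  let ?r' = "\<lambda>x w. R' (fst x) (fst (snd x)) (snd (snd x)) w"
  define D where "D w = (\<Sum>x\<in>Arr. norm (?r x w) + norm (?r' x w))" for w
  have arrx: "arrow_idx N (fst x) (fst (snd x)) (snd (snd x))" if "x \<in> Arr" for x
    using that unfolding Arr_def by auto
  have "continuous (at 0) D" unfolding D_def
    using cont[OF arrx B0] by (intro continuous_intros) auto
  moreover have "D 0 = 0" unfolding D_def using eqR[OF arrx B0] eqR'[OF arrx B0] by simp
  ultimately obtain \<delta> where \<delta>: "\<delta> > 0" "\<And>w. dist w 0 < \<delta> \<Longrightarrow> dist (D w) 0 < 1"
    unfolding continuous_at_eps_delta by (metis zero_less_one)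
  define cA where "cA = card Arr"
  define r where "r = min \<delta> (min (1 + eps) (1 / (3 * real cA + 1)))"
  have r0: "0 < r" unfolding r_def using \<delta> e0 by auto
  have small: "R a b c w = R' a b c w" if w: "w \<in> ball 0 r" and abc: "arrow_idx N a b c" for w a b c
  proof -
    have wB: "w \<in> B" using w unfolding r_def B_def by auto
    have Dw: "D w < 1" using \<delta>(2)[of w] w unfolding r_def by (auto simp: dist_norm)
    have Dnn: "0 \<le> norm (?r x w) + norm (?r' x w)" for x by simp
    have nb: "norm (R a b c w) \<le> 1" "norm (R' a b c w) \<le> 1" if "arrow_idx N a b c" for a b c
    proof -
      have x: "(a,b,c) \<in> Arr" using that unfolding Arr_def by auto
      have "norm (?r (a,b,c) w) + norm (?r' (a,b,c) w) \<le> D w"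
        unfolding D_def by (rule member_le_sum[OF x]) (auto simp: finite_Arr)
      then have h: "norm (R a b c w) + norm (R' a b c w) \<le> D w" by simp
      show "norm (R a b c w) \<le> 1" using h Dw norm_ge_zero[of "R' a b c w"] by linarith
      show "norm (R' a b c w) \<le> 1" using h Dw norm_ge_zero[of "R a b c w"] by linarith
    qed
    define S where "S = (\<Sum>x\<in>Arr. norm (?r x w - ?r' x w))"
    have dS: "norm (R a b c w - R' a b c w) \<le> S" if "arrow_idx N a b c" for a b c
    proof -
      have x: "(a,b,c) \<in> Arr" using that unfolding Arr_def by auto
      show ?thesis unfolding S_def using member_le_sum[OF x, of "\<lambda>x. norm (?r x w - ?r' x w)"] finite_Arr by auto
    qed
    have each: "norm (?r x w - ?r' x w) \<le> norm w * (3 * S)" if x: "x \<in> Arr" for x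
    proof -
      have ax: "arrow_idx N (fst x) (fst (snd x)) (snd (snd x))" using arrx[OF x] .
      have "?r x w - ?r' x w = w * (Fm N p (\<lambda>a b c. R a b c w) (fst x) (fst (snd x)) (snd (snd x)) - Fm N p (\<lambda>a b c. R' a b c w) (fst x) (fst (snd x)) (snd (snd x)))"
        using eqR[OF ax wB] eqR'[OF ax wB] by (simp add: right_diff_distrib)
      then have "norm (?r x w - ?r' x w) = norm w * norm (Fm N p (\<lambda>a b c. R a b c w) (fst x) (fst (snd x)) (snd (snd x)) - Fm N p (\<lambda>a b c. R' a b c w) (fst x) (fst (snd x)) (snd (snd x)))"
        by (simp add: norm_mult)
      also have "\<dots> \<le> norm w * (3 * S)"
        by (intro mult_left_mono Fm_lip[OF _ _ _ ax]) (use nb dS in auto)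
      finally show ?thesis .
    qed
    have "(\<Sum>x\<in>Arr. norm (?r x w - ?r' x w)) \<le> (\<Sum>x\<in>Arr. norm w * (3 * S))" using each by (rule sum_mono)
    then have "S \<le> (\<Sum>x\<in>Arr. norm w * (3 * S))" by (simp only: S_def[symmetric])
    also have "\<dots> = (3 * real cA * norm w) * S" unfolding cA_def by simp
    finally have SS: "S \<le> (3 * real cA * norm w) * S" .
    have "norm w < 1 / (3 * real cA + 1)" using w unfolding r_def by auto
    then have "(3 * real cA + 1) * norm w < 1" by (simp add: field_simps)
    moreover have "3 * real cA * norm w \<le> (3 * real cA + 1) * norm w" by (simp add: algebra_simps)
    ultimately have q: "3 * real cA * norm w < 1" by linarith
    have S0: "0 \<le> S" unfolding S_def by (rule sum_nonneg) simp
    have "S \<le> 0"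
    proof (rule ccontr)
      assume "\<not> S \<le> 0"
      then have "0 < S" by simp
      then have "(3 * real cA * norm w) * S < 1 * S" using q by (intro mult_strict_right_mono) auto
      then show False using SS by simp
    qed
    then have "norm (R a b c w - R' a b c w) \<le> 0" using dS[OF abc] by linarith
    then show ?thesis by simp
  qed
  have "(\<lambda>w. R' i j k w - R i j k w) w = 0" if "w \<in> B" for w
  proof (rule analytic_continuation[of "\<lambda>w. R' i j k w - R i j k w" B "ball 0 r" 0])
    show "(\<lambda>w. R' i j k w - R i j k w) holomorphic_on B" using hol[OF a] by (intro holomorphic_intros) auto
    show "open B" "connected B" unfolding B_def by auto
    show "ball 0 r \<subseteq> B" unfolding B_def r_def by auto
    show "0 \<in> B" by (rule B0)
    show "(0::complex) islimpt ball 0 r" unfolding islimpt_ball using r0 by simp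
    show "\<And>z. z \<in> ball 0 r \<Longrightarrow> R' i j k z - R i j k z = 0" using small[OF _ a] by simp
    show "w \<in> B" by (rule that)
  qed
  then show ?thesis using z unfolding B_def by simp
qed

end

theorem proposition3p1:
  fixes N :: nat and p :: "nat \<Rightarrow> nat \<Rightarrow> int \<Rightarrow> real"
  assumes "N \<ge> 3"
    and "\<And>i j k. arrow_idx N i j k \<Longrightarrow> 0 < p i j k \<and> p i j k < 1"
    and "\<And>i. i \<in> {1..N} \<Longrightarrow> (\<Sum>j \<in> {1..N} - {i}. \<Sum>k \<in> {-1, 1::int}. p i j k) = 1"
  shows "\<exists>eps > 0. \<exists>R. R_family N p eps R \<and>
           (\<forall>R'. R_family N p eps R' \<longrightarrow>
              (\<forall>i j k. arrow_idx N i j k \<longrightarrow> (\<forall>z \<in> ball 0 (1 + eps). R' i j k z = R i j k z)))"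
proof -
  interpret rw N p using assms by (unfold_locales) auto
  obtain eps R where "eps > 0" "R_family N p eps R" using exist by blast
  then show ?thesis using unique by blast
qed

end
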